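(* Let $\mathbf m>0$ be a real number, $\Gamma_1,\Gamma_2$ co-prime integers with $1<\Gamma_1<\Gamma_2$, $\mathbf m_i=\mathbf m\Gamma_i$ ($i=1,2$), let $1\le j\le K+1$ and $\mathbf X=\min\big(\mathbf m_2(1+\ddot n_{2,j}),\,\mathbf m_1(1+\ddot n_{1,j})\big)$. (a) For every real $\mathbf N$ with $0\le\mathbf N<\mathbf X$ and all real erroneous remainders $\tilde{\mathbf r}_1,\tilde{\mathbf r}_2$ of $\mathbf N$ whose errors satisfy $$-\frac{\sigma_j}{2}\le\frac{\Delta\mathbf r_1-\Delta\mathbf r_2}{\mathbf m}<\frac{\sigma_j}{2},$$ Algorithm 2 (real version, index $j$) returns $\hat n_1=n_1$, $\hat n_2=n_2$. In particular this holds whenever $|\Delta\mathbf r_i|\le\boldsymbol\tau$ for $i=1,2$ with $\boldsymbol\tau<\mathbf m\sigma_j/4$. (b) (Sharpness) For $\mathbf N=\mathbf X$ there exist real erroneous remainders whose errors satisfy the condition in (a), for which Algorithm 2 returns $(\hat n_1,\hat n_2)\ne(n_1,n_2)$.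
   Context: $|a|_b$ is the remainder of the integer $a$ modulo the positive integer $b$; $[x]=\lfloor x+1/2\rfloor$. For real $\mathbf N\ge0$: folding integers $n_i=\lfloor\mathbf N/\mathbf m_i\rfloor$ and real remainders $\mathbf r_i=\mathbf N-n_i\mathbf m_i\in[0,\mathbf m_i)$; erroneous remainders are reals $\tilde{\mathbf r}_i\in[0,\mathbf m_i)$ with errors $\Delta\mathbf r_i=\tilde{\mathbf r}_i-\mathbf r_i$. Euclidean sequence: $\sigma_{-1}=\Gamma_2$, $\sigma_0=\Gamma_1$, $\sigma_i=|\sigma_{i-2}|_{\sigma_{i-1}}$ for $i\ge1$; $K\ge0$ is the index with $\sigma_K>1$, $\sigma_{K+1}=1$. For $1\le n<\Gamma_1$, $S_{2,n}=\{|t\Gamma_2|_{\Gamma_1}:0\le t\le n\}$, $d_{2,n}$ = minimum distance between distinct elements of $S_{2,n}$; for $1\le n<\Gamma_2$, $S_{1,n}=\{|t\Gamma_1|_{\Gamma_2}:0\le t\le n\}$, $d_{1,n}$ likewise. $\ddot n_{2,j}=\max\{n:1\le n<\Gamma_1,\ d_{2,n}\ge\sigma_j\}$, $\ddot n_{1,j}=\max\{n:1\le n<\Gamma_2,\ d_{1,n}\ge\sigma_j\}$. $\bar\Gamma_{21}$ is the inverse of $\Gamma_2$ modulo $\Gamma_1$, $\bar\Gamma_{12}$ the inverse of $\Gamma_1$ modulo $\Gamma_2$. Algorithm 2, real version (index $j$, input $\tilde{\mathbf r}_1,\tilde{\mathbf r}_2$): compute $\mathbf q_{21}=(\tilde{\mathbf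 r}_1-\tilde{\mathbf r}_2)/\mathbf m$. (i) If $\mathbf q_{21}\ge\sigma_j/2$: if some $x\in S_{2,\ddot n_{2,j}}$ satisfies $-\sigma_j/2\le\mathbf q_{21}-x<\sigma_j/2$, let $s_2=x$; otherwise let $s_2$ be an element of $S_{2,\ddot n_{2,j}}$ at minimum distance from $\mathbf q_{21}$. Let $\hat n_2\in[0,\Gamma_1)$ with $\hat n_2\equiv s_2\bar\Gamma_{21}\pmod{\Gamma_1}$ and $\hat n_1=[(\hat n_2\mathbf m_2+\tilde{\mathbf r}_2-\tilde{\mathbf r}_1)/\mathbf m_1]$. (ii) If $\mathbf q_{21}<-\sigma_j/2$: if some $y\in S_{1,\ddot n_{1,j}}$ satisfies $-\sigma_j/2\le\mathbf q_{21}+y<\sigma_j/2$, let $s_1=y$; otherwise let $s_1$ be an element of $S_{1,\ddot n_{1,j}}$ at minimum distance from $-\mathbf q_{21}$. Let $\hat n_1\in[0,\Gamma_2)$ with $\hat n_1\equiv s_1\bar\Gamma_{12}\pmod{\Gamma_2}$ and $\hat n_2=[(\hat n_1\mathbf m_1+\tilde{\mathbf r}_1-\tilde{\mathbf r}_2)/\mathbf m_2]$. (iii) If $-\sigma_j/2\le\mathbf q_{21}<\sigma_j/2$: $\hat n_1=\hat n_2=0$. *)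

theory Defs
  imports Complex_Main
begin

text \<open>Euclidean sequence.  eseq G1 G2 k = sigma_(k-1), i.e.
  eseq 0 = sigma_(-1) = Gamma_2, eseq 1 = sigma_0 = Gamma_1,
  sigma_i = sigma_(i-2) mod sigma_(i-1).\<close>
fun eseq :: "nat \<Rightarrow> nat \<Rightarrow> nat \<Rightarrow> nat" where
  "eseq G1 G2 0 = G2"
| "eseq G1 G2 (Suc 0) = G1"
| "eseq G1 G2 (Suc (Suc i)) = eseq G1 G2 i mod eseq G1 G2 (Suc i)"

definition sigma :: "nat \<Rightarrow> nat \<Rightarrow> nat \<Rightarrow> nat" where
  "sigma G1 G2 i = eseq G1 G2 (Suc i)"

definition Kidx :: "nat \<Rightarrow> nat \<Rightarrow> nat" where
  "Kidx G1 G2 = (THE K. sigma G1 G2 K > 1 \<and> sigma G1 G2 (Suc K) = 1)"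

text \<open>Sset a b n = { |t a|_b : 0 \<le> t \<le> n }.  So S_(2,n) = Sset Gamma_2 Gamma_1 n
  and S_(1,n) = Sset Gamma_1 Gamma_2 n.\<close>
definition Sset :: "nat \<Rightarrow> nat \<Rightarrow> nat \<Rightarrow> nat set" where
  "Sset a b n = {(t * a) mod b | t. t \<le> n}"

definition dmin :: "nat set \<Rightarrow> nat" where
  "dmin A = Min {nat \<bar>int x - int y\<bar> | x y. x \<in> A \<and> y \<in> A \<and> x \<noteq> y}"

text \<open>nddot a b s = max { n : 1 \<le> n < b, d(Sset a b n) \<ge> s }.
  ddot n_(2,j) = nddot Gamma_2 Gamma_1 sigma_j, ddot n_(1,j) = nddot Gamma_1 Gamma_2 sigma_j.\<close>
definition nddot :: "nat \<Rightarrow> nat \<Rightarrow> nat \<Rightarrow> nat" where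
  "nddot a b s = Max {n. 1 \<le> n \<and> n < b \<and> dmin (Sset a b n) \<ge> s}"

definition modinv :: "nat \<Rightarrow> nat \<Rightarrow> nat" where
  "modinv a b = (THE x. x < b \<and> (a * x) mod b = 1)"

definition rnd :: "real \<Rightarrow> int" where
  "rnd x = \<lfloor>x + 1/2\<rfloor>"

text \<open>Set of all possible outputs (n1hat, n2hat) of Algorithm 2 (real version, index j)
  on input r1t, r2t; the set accounts for the free choice among equidistant
  nearest elements.\<close>
definition alg2_outputs :: "real \<Rightarrow> nat \<Rightarrow> nat \<Rightarrow> nat \<Rightarrow> real \<Rightarrow> real \<Rightarrow> (int \<times> int) set" where
  "alg2_outputs m G1 G2 j r1t r2t =
    (let q = (r1t - r2t) / m;
         s = real (sigma G1 G2 j);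
         A2 = Sset G2 G1 (nddot G2 G1 (sigma G1 G2 j));
         A1 = Sset G1 G2 (nddot G1 G2 (sigma G1 G2 j));
         m1 = m * real G1;
         m2 = m * real G2
     in {(n1h, n2h).
          (s / 2 \<le> q \<and>
            (\<exists>s2\<in>A2.
               (if (\<exists>x\<in>A2. - s / 2 \<le> q - real x \<and> q - real x < s / 2)
                then - s / 2 \<le> q - real s2 \<and> q - real s2 < s / 2
                else (\<forall>x\<in>A2. \<bar>q - real s2\<bar> \<le> \<bar>q - real x\<bar>)) \<and>
               n2h = int ((s2 * modinv G2 G1) mod G1) \<and>
               n1h = rnd ((real_of_int n2h * m2 + r2t - r1t) / m1)))
        \<or> (q < - s / 2 \<and>
            (\<exists>s1\<in>A1.
               (if (\<exists>y\<in>A1. - s / 2 \<le> q + real y \<and> q + real y < s / 2)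
                then - s / 2 \<le> q + real s1 \<and> q + real s1 < s / 2
                else (\<forall>y\<in>A1. \<bar>- q - real s1\<bar> \<le> \<bar>- q - real y\<bar>)) \<and>
               n1h = int ((s1 * modinv G1 G2) mod G2) \<and>
               n2h = rnd ((real_of_int n1h * m1 + r1t - r2t) / m2)))
        \<or> (- s / 2 \<le> q \<and> q < s / 2 \<and> n1h = 0 \<and> n2h = 0)})"

end

theory Submission
  imports Defs "HOL-Number_Theory.Number_Theory"
begin


lemma eseq_gcd:
  assumes "coprime G1 G2"
  shows "gcd (eseq G1 G2 i) (eseq G1 G2 (Suc i)) = 1"
proof (induction i)
  case 0 then show ?case using assms by (metis coprime_commute coprime_iff_gcd_eq_1 eseq.simps(1,2))
next
  case (Suc i)
  have "gcd (eseq G1 G2 i) (eseq G1 G2 (Suc i)) = gcd (eseq G1 G2 (Suc i)) (eseq G1 G2 i mod eseq G1 G2 (Suc i))"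
    by (rule gcd_red_nat)
  then show ?case using Suc.IH by simp
qed

lemma sigma1': "sigma G1 G2 (Suc 0) = G2 mod G1"
  by (simp add: sigma_def)

lemma sigma1: "sigma G1 G2 1 = G2 mod G1"
  using sigma1' by simp

lemma sigma1_pos:
  assumes "coprime G1 G2" "1 < G1"
  shows "0 < sigma G1 G2 1"
proof (rule ccontr)
  assume "\<not> 0 < sigma G1 G2 1"
  then have "G2 mod G1 = 0" unfolding sigma1 by simp
  then have "G1 dvd G2" by (simp add: dvd_eq_mod_eq_0)
  then have "G1 dvd gcd G1 G2" by (rule gcd_greatest[OF dvd_refl])
  moreover have "gcd G1 G2 = 1" using assms(1) by (rule coprime_imp_gcd_eq_1)
  ultimately show False using assms(2) by simp
qed

lemma sigma1_lt:
  assumes "1 < G1" shows "sigma G1 G2 1 < G1"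
  using assms unfolding sigma1 by simp

lemma eseq_le2:
  assumes "coprime G1 G2" "1 < G1"
  shows "eseq G1 G2 (Suc (Suc k)) \<le> eseq G1 G2 (Suc (Suc 0))"
proof (induction k rule: less_induct)
  case (less k)
  have p: "0 < eseq G1 G2 (Suc (Suc 0))" using sigma1_pos[OF assms] sigma1' sigma1 by simp
  show ?case
  proof (cases k)
    case 0 then show ?thesis by simp
  next
    case (Suc k1)
    show ?thesis
    proof (cases k1)
      case 0
      have "eseq G1 G2 (Suc (Suc k)) = eseq G1 G2 (Suc 0) mod eseq G1 G2 (Suc (Suc 0))"
        using Suc 0 by simp
      also have "\<dots> < eseq G1 G2 (Suc (Suc 0))" using p by simp
      finally show ?thesis by simp
    next
      case (Suc k2)
      have "eseq G1 G2 (Suc (Suc k)) \<le> eseq G1 G2 (Suc (Suc k2))"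
        using \<open>k = Suc k1\<close> Suc by simp
      also have "\<dots> \<le> eseq G1 G2 (Suc (Suc 0))" using less.IH \<open>k = Suc k1\<close> Suc by simp
      finally show ?thesis .
    qed
  qed
qed

lemma sigma_le1_step:
  assumes "coprime G1 G2" "sigma G1 G2 i \<le> 1"
  shows "sigma G1 G2 (Suc i) \<le> 1"
proof (cases "sigma G1 G2 i = 1")
  case True then show ?thesis by (simp add: sigma_def)
next
  case False
  then have z: "eseq G1 G2 (Suc i) = 0" using assms(2) by (simp add: sigma_def)
  have "gcd (eseq G1 G2 (Suc i)) (eseq G1 G2 (Suc (Suc i))) = 1" by (rule eseq_gcd[OF assms(1)])
  then show ?thesis using z by (simp add: sigma_def)
qed

lemma sigma_le1_prop:
  assumes "coprime G1 G2" "sigma G1 G2 i \<le> 1" "i \<le> k"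
  shows "sigma G1 G2 k \<le> 1"
  using assms(3)
proof (induction k rule: dec_induct)
  case base then show ?case using assms(2) .
next
  case (step n) then show ?case using sigma_le1_step[OF assms(1)] by blast
qed

lemma sigma_dec:
  assumes "0 < sigma G1 G2 i" shows "sigma G1 G2 (Suc i) < sigma G1 G2 i"
  using assms by (simp add: sigma_def)

lemma Kidx_spec:
  assumes "coprime G1 G2" "1 < G1"
  shows "1 < sigma G1 G2 (Kidx G1 G2) \<and> sigma G1 G2 (Suc (Kidx G1 G2)) = 1"
proof -
  have ex: "\<exists>i. sigma G1 G2 i \<le> 1"
  proof (rule ccontr)
    assume "\<not> ?thesis"
    then have nle: "\<not> sigma G1 G2 i \<le> 1" for i by blast
    have all: "2 \<le> sigma G1 G2 i" for i using nle[of i] by linarith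
    have "sigma G1 G2 i + i \<le> G1" for i
    proof (induction i)
      case 0 then show ?case by (simp add: sigma_def)
    next
      case (Suc i)
      have "sigma G1 G2 (Suc i) < sigma G1 G2 i" using all[of i] sigma_dec by simp
      then show ?case using Suc by simp
    qed
    from this[of G1] all[of G1] show False by simp
  qed
  define K' where "K' = (LEAST i. sigma G1 G2 i \<le> 1)"
  have K'1: "sigma G1 G2 K' \<le> 1" unfolding K'_def by (rule LeastI_ex[OF ex])
  have s0: "sigma G1 G2 0 = G1" by (simp add: sigma_def)
  have K'0: "K' \<noteq> 0"
  proof
    assume "K' = 0"
    then have "sigma G1 G2 K' = G1" using s0 by simp
    with K'1 assms(2) show False by simp
  qed
  then obtain K where K: "K' = Suc K" using not0_implies_Suc by blast
  have gt: "1 < sigma G1 G2 K"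
  proof (rule ccontr)
    assume "\<not> 1 < sigma G1 G2 K"
    then have "K' \<le> K" unfolding K'_def by (intro Least_le) simp
    then show False using K by simp
  qed
  have eq1: "sigma G1 G2 (Suc K) = 1"
  proof (rule ccontr)
    assume "sigma G1 G2 (Suc K) \<noteq> 1"
    then have z: "sigma G1 G2 (Suc K) = 0" using K'1 K by simp
    have "gcd (eseq G1 G2 (Suc K)) (eseq G1 G2 (Suc (Suc K))) = 1" by (rule eseq_gcd[OF assms(1)])
    then have "sigma G1 G2 K = 1" using z by (simp add: sigma_def)
    then show False using gt by simp
  qed
  have uniq: "K2 = K" if "1 < sigma G1 G2 K2" "sigma G1 G2 (Suc K2) = 1" for K2
  proof (rule ccontr)
    assume "K2 \<noteq> K"
    then consider "Suc K \<le> K2" | "Suc K2 \<le> K" by linarith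
    then show False
    proof cases
      case 1
      have "sigma G1 G2 K2 \<le> 1" using sigma_le1_prop[OF assms(1) _ 1] eq1 by simp
      then show False using that(1) by linarith
    next
      case 2
      have "sigma G1 G2 K \<le> 1" using sigma_le1_prop[OF assms(1) _ 2] that(2) by simp
      then show False using gt by linarith
    qed
  qed
  have "Kidx G1 G2 = K" unfolding Kidx_def
  proof (rule the_equality)
    show "1 < sigma G1 G2 K \<and> sigma G1 G2 (Suc K) = 1" using gt eq1 by blast
  next
    fix K2 assume "1 < sigma G1 G2 K2 \<and> sigma G1 G2 (Suc K2) = 1"
    then show "K2 = K" using uniq by blast
  qed
  then show ?thesis using gt eq1 by simp
qed

lemma sigma_j_props:
  assumes "coprime G1 G2" "1 < G1" "1 \<le> j" "j \<le> Kidx G1 G2 + 1"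
  shows "1 \<le> sigma G1 G2 j" "sigma G1 G2 j \<le> sigma G1 G2 1" "sigma G1 G2 j < G1"
proof -
  show "1 \<le> sigma G1 G2 j"
  proof (rule ccontr)
    assume "\<not> 1 \<le> sigma G1 G2 j"
    then have "sigma G1 G2 j = 0" by simp
    show False
    proof (cases "j = Kidx G1 G2 + 1")
      case True then show False using Kidx_spec[OF assms(1,2)] \<open>sigma G1 G2 j = 0\<close> by simp
    next
      case False
      then have "j \<le> Kidx G1 G2" using assms(4) by simp
      then show False using sigma_le1_prop[OF assms(1), of j "Kidx G1 G2"] \<open>sigma G1 G2 j = 0\<close>
        Kidx_spec[OF assms(1,2)] by simp
    qed
  qed
  obtain j1 where j1: "j = Suc j1" using assms(3) by (cases j) auto
  have "sigma G1 G2 j \<le> sigma G1 G2 (Suc 0)"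
    using eseq_le2[OF assms(1,2), of j1] j1 unfolding sigma_def by simp
  then show le: "sigma G1 G2 j \<le> sigma G1 G2 1" by simp
  show "sigma G1 G2 j < G1" using le_less_trans[OF le sigma1_lt[OF assms(2), of G2]] .
qed



lemma modinv_spec:
  assumes "coprime a b" "1 < b"
  shows "modinv a b < b \<and> (a * modinv a b) mod b = 1"
proof -
  have "0 < b" using assms(2) by simp
  then obtain x where x: "x < b" "[a * x = Suc 0] (mod b)"
    using coprime_iff_invertible'_nat assms(1) by blast
  have x1: "(a * x) mod b = 1" using x(2) assms(2) unfolding cong_def by simp
  have "modinv a b = x" unfolding modinv_def
  proof (rule the_equality)
    show "x < b \<and> a * x mod b = 1" using x x1 by blast
  next
    fix y assume y: "y < b \<and> a * y mod b = 1"
    then have "[a * y = a * x] (mod b)" using x1 unfolding cong_def by simp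
    then have "[y = x] (mod b)" using cong_mult_lcancel_nat[OF assms(1)] by blast
    then show "y = x" using cong_less_modulus_unique_nat y x(1) by blast
  qed
  then show ?thesis using x x1 by simp
qed

lemma modinv_undo:
  assumes "coprime a b" "1 < b" "t < b"
  shows "((t * a mod b) * modinv a b) mod b = t"
proof -
  have i: "(a * modinv a b) mod b = 1" using modinv_spec[OF assms(1,2)] by blast
  have "((t * a mod b) * modinv a b) mod b = (t * a * modinv a b) mod b"
    by (simp add: mod_mult_left_eq)
  also have "\<dots> = (t * (a * modinv a b)) mod b" by (simp add: mult.assoc)
  also have "\<dots> = (t * ((a * modinv a b) mod b)) mod b" by (simp add: mod_mult_right_eq)
  also have "\<dots> = t" using i assms(3) by simp
  finally show ?thesis .
qed

lemma Sset_img: "Sset a b n = (\<lambda>t. t * a mod b) ` {..n}"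
  unfolding Sset_def by auto

lemma Sset_fin: "finite (Sset a b n)"
  unfolding Sset_img by simp

lemma Sset_mem: "t \<le> n \<Longrightarrow> t * a mod b \<in> Sset a b n"
  unfolding Sset_def by blast

lemma Sset_zero: "0 \<in> Sset a b n"
  using Sset_mem[of 0 n a b] by simp

lemma Sset_elem: "x \<in> Sset a b n \<Longrightarrow> \<exists>t\<le>n. x = t * a mod b"
  unfolding Sset_def by blast

lemma dmin_sep:
  assumes "finite A" "s \<le> dmin A" "x \<in> A" "y \<in> A" "x \<noteq> y"
  shows "s \<le> nat \<bar>int x - int y\<bar>"
proof -
  let ?D = "{nat \<bar>int x - int y\<bar> | x y. x \<in> A \<and> y \<in> A \<and> x \<noteq> y}"
  have "?D \<subseteq> (\<lambda>(x,y). nat \<bar>int x - int y\<bar>) ` (A \<times> A)" by auto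
  then have f: "finite ?D" using assms(1) by (meson finite_SigmaI finite_imageI finite_subset)
  have "nat \<bar>int x - int y\<bar> \<in> ?D" using assms(3,4,5) by blast
  then have "Min ?D \<le> nat \<bar>int x - int y\<bar>" using f by simp
  then show ?thesis using assms(2) unfolding dmin_def by simp
qed

lemma nddot_props:
  assumes "0 < a mod b" "s \<le> a mod b" "1 < b"
  shows "1 \<le> nddot a b s \<and> nddot a b s < b \<and> s \<le> dmin (Sset a b (nddot a b s))"
proof -
  let ?NS = "{n. 1 \<le> n \<and> n < b \<and> dmin (Sset a b n) \<ge> s}"
  have S1: "Sset a b 1 = {0, a mod b}"
  proof
    show "Sset a b 1 \<subseteq> {0, a mod b}"
    proof
      fix x assume "x \<in> Sset a b 1"
      then obtain t where "t \<le> 1" "x = t * a mod b" using Sset_elem by blast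
      then show "x \<in> {0, a mod b}" by (cases t) auto
    qed
    show "{0, a mod b} \<subseteq> Sset a b 1" using Sset_mem[of 1 1 a b] Sset_zero by auto
  qed
  have D: "{nat \<bar>int x - int y\<bar> | x y. x \<in> Sset a b 1 \<and> y \<in> Sset a b 1 \<and> x \<noteq> y} = {a mod b}"
  proof
    show "{a mod b} \<subseteq> {nat \<bar>int x - int y\<bar> | x y. x \<in> Sset a b 1 \<and> y \<in> Sset a b 1 \<and> x \<noteq> y}"
    proof -
      have "a mod b = nat \<bar>int (a mod b) - int 0\<bar>" by simp
      moreover have "a mod b \<in> Sset a b 1" "0 \<in> Sset a b 1" "a mod b \<noteq> 0" using S1 assms(1) by auto
      ultimately show ?thesis by blast
    qed
  next
    show "{nat \<bar>int x - int y\<bar> | x y. x \<in> Sset a b 1 \<and> y \<in> Sset a b 1 \<and> x \<noteq> y} \<subseteq> {a mod b}"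
    proof
      fix z assume "z \<in> {nat \<bar>int x - int y\<bar> | x y. x \<in> Sset a b 1 \<and> y \<in> Sset a b 1 \<and> x \<noteq> y}"
      then obtain x y where "z = nat \<bar>int x - int y\<bar>" "x \<in> {0, a mod b}" "y \<in> {0, a mod b}" "x \<noteq> y"
        unfolding S1 by blast
      then show "z \<in> {a mod b}" by auto
    qed
  qed
  have "dmin (Sset a b 1) = a mod b" unfolding dmin_def D by simp
  then have "1 \<in> ?NS" using assms by simp
  moreover have "finite ?NS" by (rule finite_subset[of _ "{..<b}"]) auto
  ultimately have "Max ?NS \<in> ?NS" by (intro Max_in) auto
  then have "nddot a b s \<in> ?NS" unfolding nddot_def .
  then show ?thesis by simp
qed



lemma alg2_mem:
  fixes m r1t r2t :: real and G1 G2 j k :: nat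
  defines "q \<equiv> (r1t - r2t) / m" and "s \<equiv> real (sigma G1 G2 j)"
    and "A2 \<equiv> Sset G2 G1 (nddot G2 G1 (sigma G1 G2 j))"
    and "A1 \<equiv> Sset G1 G2 (nddot G1 G2 (sigma G1 G2 j))"
  shows "(n1h, n2h) \<in> alg2_outputs m G1 G2 j r1t r2t \<longleftrightarrow>
          (s / 2 \<le> q \<and>
            (\<exists>s2\<in>A2.
               (if (\<exists>x\<in>A2. - s / 2 \<le> q - real x \<and> q - real x < s / 2)
                then - s / 2 \<le> q - real s2 \<and> q - real s2 < s / 2
                else (\<forall>x\<in>A2. \<bar>q - real s2\<bar> \<le> \<bar>q - real x\<bar>)) \<and>
               n2h = int ((s2 * modinv G2 G1) mod G1) \<and>
               n1h = rnd ((real_of_int n2h * (m * real G2) + r2t - r1t) / (m * real G1))))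
        \<or> (q < - s / 2 \<and>
            (\<exists>s1\<in>A1.
               (if (\<exists>y\<in>A1. - s / 2 \<le> q + real y \<and> q + real y < s / 2)
                then - s / 2 \<le> q + real s1 \<and> q + real s1 < s / 2
                else (\<forall>y\<in>A1. \<bar>- q - real s1\<bar> \<le> \<bar>- q - real y\<bar>)) \<and>
               n1h = int ((s1 * modinv G1 G2) mod G2) \<and>
               n2h = rnd ((real_of_int n1h * (m * real G1) + r1t - r2t) / (m * real G2))))
        \<or> (- s / 2 \<le> q \<and> q < s / 2 \<and> n1h = 0 \<and> n2h = 0)"
  unfolding alg2_outputs_def Let_def q_def s_def A2_def A1_def
  by (simp only: mem_Collect_eq case_prod_conv)

lemma case3:
  fixes m r1t r2t :: real and G1 G2 j k :: nat
  assumes "- real (sigma G1 G2 j) / 2 \<le> (r1t - r2t) / m" "(r1t - r2t) / m < real (sigma G1 G2 j) / 2"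
  shows "alg2_outputs m G1 G2 j r1t r2t = {(0, 0)}"
proof (rule Set.set_eqI)
  fix p :: "int \<times> int"
  obtain a b where p: "p = (a, b)" by (cases p)
  show "p \<in> alg2_outputs m G1 G2 j r1t r2t \<longleftrightarrow> p \<in> {(0, 0)}"
    unfolding p alg2_mem using assms by auto
qed

lemma case1:
  fixes m r1t r2t :: real and G1 G2 j k :: nat
  defines "q \<equiv> (r1t - r2t) / m" and "s \<equiv> real (sigma G1 G2 j)"
    and "A2 \<equiv> Sset G2 G1 (nddot G2 G1 (sigma G1 G2 j))"
  assumes q: "s / 2 \<le> q" and k: "k \<in> A2" "- s / 2 \<le> q - real k" "q - real k < s / 2"
    and u: "\<And>x. x \<in> A2 \<Longrightarrow> - s / 2 \<le> q - real x \<Longrightarrow> q - real x < s / 2 \<Longrightarrow> x = k"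
  shows "alg2_outputs m G1 G2 j r1t r2t =
     {(rnd ((real_of_int (int ((k * modinv G2 G1) mod G1)) * (m * real G2) + r2t - r1t) / (m * real G1)),
       int ((k * modinv G2 G1) mod G1))}"
proof (rule Set.set_eqI)
  fix p :: "int \<times> int"
  obtain a b where p: "p = (a, b)" by (cases p)
  have ex: "\<exists>x\<in>A2. - s / 2 \<le> q - real x \<and> q - real x < s / 2" using k by blast
  have s0: "0 \<le> s" unfolding s_def by simp
  have nq: "\<not> q < - s / 2" "\<not> q < s / 2" using q s0 by linarith+
  show "p \<in> alg2_outputs m G1 G2 j r1t r2t \<longleftrightarrow> p \<in> {(rnd ((real_of_int (int ((k * modinv G2 G1) mod G1)) * (m * real G2) + r2t - r1t) / (m * real G1)),
       int ((k * modinv G2 G1) mod G1))}" (is "?L \<longleftrightarrow> ?R")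
  proof
    assume ?L
    then obtain s2 where s2: "s2 \<in> A2" "- s / 2 \<le> q - real s2 \<and> q - real s2 < s / 2"
      "b = int ((s2 * modinv G2 G1) mod G1)"
      "a = rnd ((real_of_int b * (m * real G2) + r2t - r1t) / (m * real G1))"
      using nq ex unfolding p alg2_mem q_def[symmetric] s_def[symmetric] A2_def[symmetric] by auto
    then have "s2 = k" using u by blast
    then show ?R using s2 unfolding p by simp
  next
    assume ?R
    then show ?L
      unfolding p alg2_mem q_def[symmetric] s_def[symmetric] A2_def[symmetric] using q k ex by auto
  qed
qed

lemma case2:
  fixes m r1t r2t :: real and G1 G2 j k :: nat
  defines "q \<equiv> (r1t - r2t) / m" and "s \<equiv> real (sigma G1 G2 j)"
    and "A1 \<equiv> Sset G1 G2 (nddot G1 G2 (sigma G1 G2 j))"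
  assumes q: "q < - s / 2" and k: "k \<in> A1" "- s / 2 \<le> q + real k" "q + real k < s / 2"
    and u: "\<And>x. x \<in> A1 \<Longrightarrow> - s / 2 \<le> q + real x \<Longrightarrow> q + real x < s / 2 \<Longrightarrow> x = k"
  shows "alg2_outputs m G1 G2 j r1t r2t =
     {(int ((k * modinv G1 G2) mod G2),
       rnd ((real_of_int (int ((k * modinv G1 G2) mod G2)) * (m * real G1) + r1t - r2t) / (m * real G2)))}"
proof (rule Set.set_eqI)
  fix p :: "int \<times> int"
  obtain a b where p: "p = (a, b)" by (cases p)
  have ex: "\<exists>x\<in>A1. - s / 2 \<le> q + real x \<and> q + real x < s / 2" using k by blast
  have s0: "0 \<le> s" unfolding s_def by simp
  have nq: "\<not> s / 2 \<le> q" "\<not> - s / 2 \<le> q" using q s0 by linarith+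
  show "p \<in> alg2_outputs m G1 G2 j r1t r2t \<longleftrightarrow> p \<in> {(int ((k * modinv G1 G2) mod G2),
       rnd ((real_of_int (int ((k * modinv G1 G2) mod G2)) * (m * real G1) + r1t - r2t) / (m * real G2)))}" (is "?L \<longleftrightarrow> ?R")
  proof
    assume ?L
    then obtain s1 where s1: "s1 \<in> A1" "- s / 2 \<le> q + real s1 \<and> q + real s1 < s / 2"
      "a = int ((s1 * modinv G1 G2) mod G2)"
      "b = rnd ((real_of_int a * (m * real G1) + r1t - r2t) / (m * real G2))"
      using nq ex unfolding p alg2_mem q_def[symmetric] s_def[symmetric] A1_def[symmetric] by auto
    then have "s1 = k" using u by blast
    then show ?R using s1 unfolding p by simp
  next
    assume ?R
    then show ?L
      unfolding p alg2_mem q_def[symmetric] s_def[symmetric] A1_def[symmetric] using q k ex by auto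
  qed
qed

lemma argmin_ex:
  fixes f :: "nat \<Rightarrow> real"
  assumes "finite A" "A \<noteq> {}"
  shows "\<exists>x\<in>A. \<forall>y\<in>A. f x \<le> f y"
proof -
  have "Min (f ` A) \<in> f ` A" using assms by simp
  then obtain x where x: "x \<in> A" "f x = Min (f ` A)" by auto
  have "\<forall>y\<in>A. f x \<le> f y" using x(2) assms(1) by simp
  then show ?thesis using x(1) by blast
qed

lemma case1_weak:
  fixes m r1t r2t :: real and G1 G2 j :: nat
  defines "q \<equiv> (r1t - r2t) / m" and "s \<equiv> real (sigma G1 G2 j)"
    and "A2 \<equiv> Sset G2 G1 (nddot G2 G1 (sigma G1 G2 j))"
  assumes q: "s / 2 \<le> q"
  shows "alg2_outputs m G1 G2 j r1t r2t \<noteq> {}"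
    "\<And>a b. (a, b) \<in> alg2_outputs m G1 G2 j r1t r2t \<Longrightarrow> \<exists>s2\<in>A2. b = int ((s2 * modinv G2 G1) mod G1)"
proof -
  have s0: "0 \<le> s" unfolding s_def by simp
  have nq: "\<not> q < - s / 2" "\<not> q < s / 2" using q s0 by linarith+
  fix a b assume "(a, b) \<in> alg2_outputs m G1 G2 j r1t r2t"
  then show "\<exists>s2\<in>A2. b = int ((s2 * modinv G2 G1) mod G1)"
    using nq unfolding alg2_mem q_def[symmetric] s_def[symmetric] A2_def[symmetric] by auto
next
  have s0: "0 \<le> s" unfolding s_def by simp
  have fin: "finite A2" "A2 \<noteq> {}" unfolding A2_def using Sset_fin Sset_zero by (metis empty_iff)+
  have "\<exists>s2\<in>A2. (if (\<exists>x\<in>A2. - s / 2 \<le> q - real x \<and> q - real x < s / 2)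
                then - s / 2 \<le> q - real s2 \<and> q - real s2 < s / 2
                else (\<forall>x\<in>A2. \<bar>q - real s2\<bar> \<le> \<bar>q - real x\<bar>))"
  proof (cases "\<exists>x\<in>A2. - s / 2 \<le> q - real x \<and> q - real x < s / 2")
    case True then show ?thesis by auto
  next
    case False
    obtain x where "x \<in> A2" "\<forall>y\<in>A2. \<bar>q - real x\<bar> \<le> \<bar>q - real y\<bar>"
      using argmin_ex[OF fin, of "\<lambda>x. \<bar>q - real x\<bar>"] by blast
    then show ?thesis using False by auto
  qed
  then obtain s2 where s2: "s2 \<in> A2" "(if (\<exists>x\<in>A2. - s / 2 \<le> q - real x \<and> q - real x < s / 2)
                then - s / 2 \<le> q - real s2 \<and> q - real s2 < s / 2
                else (\<forall>x\<in>A2. \<bar>q - real s2\<bar> \<le> \<bar>q - real x\<bar>))" by blast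
  define b where "b = int ((s2 * modinv G2 G1) mod G1)"
  define a where "a = rnd ((real_of_int b * (m * real G2) + r2t - r1t) / (m * real G1))"
  have "(a, b) \<in> alg2_outputs m G1 G2 j r1t r2t"
    unfolding alg2_mem q_def[symmetric] s_def[symmetric] A2_def[symmetric]
    using q s2 a_def b_def by blast
  then show "alg2_outputs m G1 G2 j r1t r2t \<noteq> {}" by blast
qed

lemma case2_weak:
  fixes m r1t r2t :: real and G1 G2 j :: nat
  defines "q \<equiv> (r1t - r2t) / m" and "s \<equiv> real (sigma G1 G2 j)"
    and "A1 \<equiv> Sset G1 G2 (nddot G1 G2 (sigma G1 G2 j))"
  assumes q: "q < - s / 2"
  shows "alg2_outputs m G1 G2 j r1t r2t \<noteq> {}"
    "\<And>a b. (a, b) \<in> alg2_outputs m G1 G2 j r1t r2t \<Longrightarrow> \<exists>s1\<in>A1. a = int ((s1 * modinv G1 G2) mod G2)"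
proof -
  have s0: "0 \<le> s" unfolding s_def by simp
  have nq: "\<not> s / 2 \<le> q" "\<not> - s / 2 \<le> q" using q s0 by linarith+
  fix a b assume "(a, b) \<in> alg2_outputs m G1 G2 j r1t r2t"
  then show "\<exists>s1\<in>A1. a = int ((s1 * modinv G1 G2) mod G2)"
    using nq unfolding alg2_mem q_def[symmetric] s_def[symmetric] A1_def[symmetric] by auto
next
  have fin: "finite A1" "A1 \<noteq> {}" unfolding A1_def using Sset_fin Sset_zero by (metis empty_iff)+
  have "\<exists>s1\<in>A1. (if (\<exists>y\<in>A1. - s / 2 \<le> q + real y \<and> q + real y < s / 2)
                then - s / 2 \<le> q + real s1 \<and> q + real s1 < s / 2
                else (\<forall>y\<in>A1. \<bar>- q - real s1\<bar> \<le> \<bar>- q - real y\<bar>))"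
  proof (cases "\<exists>y\<in>A1. - s / 2 \<le> q + real y \<and> q + real y < s / 2")
    case True then show ?thesis by auto
  next
    case False
    obtain x where "x \<in> A1" "\<forall>y\<in>A1. \<bar>- q - real x\<bar> \<le> \<bar>- q - real y\<bar>"
      using argmin_ex[OF fin, of "\<lambda>x. \<bar>- q - real x\<bar>"] by blast
    then show ?thesis using False by auto
  qed
  then obtain s1 where s1: "s1 \<in> A1" "(if (\<exists>y\<in>A1. - s / 2 \<le> q + real y \<and> q + real y < s / 2)
                then - s / 2 \<le> q + real s1 \<and> q + real s1 < s / 2
                else (\<forall>y\<in>A1. \<bar>- q - real s1\<bar> \<le> \<bar>- q - real y\<bar>))" by blast
  define a where "a = int ((s1 * modinv G1 G2) mod G2)"
  define b where "b = rnd ((real_of_int a * (m * real G1) + r1t - r2t) / (m * real G2))"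
  have "(a, b) \<in> alg2_outputs m G1 G2 j r1t r2t"
    unfolding alg2_mem q_def[symmetric] s_def[symmetric] A1_def[symmetric]
    using q s1 a_def b_def by blast
  then show "alg2_outputs m G1 G2 j r1t r2t \<noteq> {}" by blast
qed



lemma rnd_minus: "- 1/2 < d \<Longrightarrow> d \<le> 1/2 \<Longrightarrow> rnd (real_of_int z - d) = z"
  unfolding rnd_def by (rule floor_unique) auto

lemma rnd_plus: "- 1/2 \<le> d \<Longrightarrow> d < 1/2 \<Longrightarrow> rnd (real_of_int z + d) = z"
  unfolding rnd_def by (rule floor_unique) auto

lemma partA:
  fixes m :: real and G1 G2 j :: nat and N r1t r2t :: real
  assumes m_pos: "m > 0"
    and cop: "coprime G1 G2"
    and G1_gt: "1 < G1" and G12: "G1 < G2"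
    and j_ge: "1 \<le> j" and j_le: "j \<le> Kidx G1 G2 + 1"
    and N0: "0 \<le> N"
    and NX2: "N < m * real G2 * (1 + real (nddot G2 G1 (sigma G1 G2 j)))"
    and NX1: "N < m * real G1 * (1 + real (nddot G1 G2 (sigma G1 G2 j)))"
    and r1t: "0 \<le> r1t" "r1t < m * real G1" and r2t: "0 \<le> r2t" "r2t < m * real G2"
    and e1: "- real (sigma G1 G2 j) / 2 \<le> ((r1t - (N - real_of_int \<lfloor>N / (m * real G1)\<rfloor> * (m * real G1)))
              - (r2t - (N - real_of_int \<lfloor>N / (m * real G2)\<rfloor> * (m * real G2)))) / m"
    and e2: "((r1t - (N - real_of_int \<lfloor>N / (m * real G1)\<rfloor> * (m * real G1)))
              - (r2t - (N - real_of_int \<lfloor>N / (m * real G2)\<rfloor> * (m * real G2)))) / m < real (sigma G1 G2 j) / 2"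
  shows "alg2_outputs m G1 G2 j r1t r2t = {(\<lfloor>N / (m * real G1)\<rfloor>, \<lfloor>N / (m * real G2)\<rfloor>)}"
proof -
  define m1 where "m1 = m * real G1"
  define m2 where "m2 = m * real G2"
  define n1 where "n1 = \<lfloor>N / m1\<rfloor>"
  define n2 where "n2 = \<lfloor>N / m2\<rfloor>"
  define r1 where "r1 = N - real_of_int n1 * m1"
  define r2 where "r2 = N - real_of_int n2 * m2"
  define sg where "sg = sigma G1 G2 j"
  define s where "s = real sg"
  define nd1 where "nd1 = nddot G1 G2 sg"
  define nd2 where "nd2 = nddot G2 G1 sg"
  define A1 where "A1 = Sset G1 G2 nd1"
  define A2 where "A2 = Sset G2 G1 nd2"
  define e where "e = ((r1t - r1) - (r2t - r2)) / m"
  define q where "q = (r1t - r2t) / m"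
  have eb: "- s / 2 \<le> e" "e < s / 2" using e1 e2 unfolding e_def s_def sg_def r1_def r2_def n1_def n2_def m1_def m2_def by auto
  have cop': "coprime G2 G1" using cop by (rule coprime_commute[THEN iffD1])
  have G2_gt: "1 < G2" using G1_gt G12 by simp
  have sgp: "1 \<le> sg" "sg \<le> sigma G1 G2 1" "sg < G1"
    using sigma_j_props[OF cop G1_gt j_ge j_le] unfolding sg_def by auto
  have s1: "sigma G1 G2 1 = G2 mod G1" by (rule sigma1)
  have sp1: "0 < sigma G1 G2 1" by (rule sigma1_pos[OF cop G1_gt])
  have nd2p: "1 \<le> nd2 \<and> nd2 < G1 \<and> sg \<le> dmin A2"
    unfolding nd2_def A2_def by (rule nddot_props) (use sgp s1 sp1 G1_gt in auto)
  have G1m: "G1 mod G2 = G1" using G12 by simp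
  have nd1p: "1 \<le> nd1 \<and> nd1 < G2 \<and> sg \<le> dmin A1"
    unfolding nd1_def A1_def by (rule nddot_props) (use sgp G1m G1_gt G2_gt in auto)
  have sep2: "sg \<le> nat \<bar>int x - int y\<bar>" if "x \<in> A2" "y \<in> A2" "x \<noteq> y" for x y
    using dmin_sep[of A2 sg x y] that nd2p unfolding A2_def by (simp add: Sset_fin)
  have sep1: "sg \<le> nat \<bar>int x - int y\<bar>" if "x \<in> A1" "y \<in> A1" "x \<noteq> y" for x y
    using dmin_sep[of A1 sg x y] that nd1p unfolding A1_def by (simp add: Sset_fin)
  have sepr2: "s \<le> \<bar>real x - real y\<bar>" if "x \<in> A2" "y \<in> A2" "x \<noteq> y" for x y
  proof -
    have "sg \<le> nat \<bar>int x - int y\<bar>" using sep2 that by blast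
    then show ?thesis unfolding s_def by linarith
  qed
  have sepr1: "s \<le> \<bar>real x - real y\<bar>" if "x \<in> A1" "y \<in> A1" "x \<noteq> y" for x y
  proof -
    have "sg \<le> nat \<bar>int x - int y\<bar>" using sep1 that by blast
    then show ?thesis unfolding s_def by linarith
  qed
  have m1p: "0 < m1" "0 < m2" unfolding m1_def m2_def using m_pos G1_gt G2_gt by auto
  have fl1: "real_of_int n1 \<le> N / m1" "N / m1 < real_of_int n1 + 1" unfolding n1_def by linarith+
  have fl2: "real_of_int n2 \<le> N / m2" "N / m2 < real_of_int n2 + 1" unfolding n2_def by linarith+
  have n10: "0 \<le> n1" unfolding n1_def using N0 m1p by simp
  have n20: "0 \<le> n2" unfolding n2_def using N0 m1p by simp
  have r1b: "0 \<le> r1" "r1 < m1" using fl1 m1p unfolding r1_def by (auto simp: field_simps)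
  have r2b: "0 \<le> r2" "r2 < m2" using fl2 m1p unfolding r2_def by (auto simp: field_simps)
  have "N / m2 < 1 + real nd2" using NX2 m1p unfolding m2_def nd2_def sg_def by (simp add: field_simps mult.commute)
  then have n2le: "n2 \<le> int nd2" using fl2 by linarith
  have "N / m1 < 1 + real nd1" using NX1 m1p unfolding m1_def nd1_def sg_def by (simp add: field_simps mult.commute)
  then have n1le: "n1 \<le> int nd1" using fl1 by linarith
  define k where "k = n2 * int G2 - n1 * int G1"
  have rk: "r1 - r2 = m * real_of_int k" unfolding r1_def r2_def k_def m1_def m2_def
    by (simp add: algebra_simps)
  have qk: "q = real_of_int k + e" unfolding q_def e_def using rk m_pos by (simp add: field_simps)
  have kub: "k < int G1"
  proof -
    have "m * real_of_int k < m * real G1" using rk r1b r2b unfolding m1_def by linarith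
    then have "real_of_int k < real G1" using m_pos by simp
    then show ?thesis by linarith
  qed
  have klb: "- int G2 < k"
  proof -
    have "m * (- real G2) < m * real_of_int k" using rk r1b r2b unfolding m2_def by linarith
    then have "- real G2 < real_of_int k" using m_pos by (simp only: mult_less_cancel_left_pos)
    then show ?thesis by linarith
  qed
  have s_lt: "s < real G1" using sgp unfolding s_def by simp
  have q_eq: "q = (r1t - r2t) / m" by (simp add: q_def)
  define t1 where "t1 = nat n1"
  define t2 where "t2 = nat n2"
  have t1: "int t1 = n1" "t1 \<le> nd1" "t1 < G2" using n10 n1le nd1p unfolding t1_def by auto
  have t2: "int t2 = n2" "t2 \<le> nd2" "t2 < G1" using n20 n2le nd2p unfolding t2_def by auto
  have Nr1: "N = real_of_int n1 * m1 + r1" unfolding r1_def by simp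
  have Nr2: "N = real_of_int n2 * m2 + r2" unfolding r2_def by simp
  consider "0 < k" | "k < 0" | "k = 0" by linarith
  then show ?thesis
  proof cases
    case 1
    define kn where "kn = nat k"
    have "k = (n2 * int G2) mod int G1"
    proof -
      have "(n2 * int G2) mod int G1 = (k + n1 * int G1) mod int G1" unfolding k_def by simp
      also have "\<dots> = k mod int G1" by simp
      also have "\<dots> = k" using 1 kub by simp
      finally show ?thesis by simp
    qed
    then have "int kn = int ((t2 * G2) mod G1)" unfolding kn_def using 1 t2(1)
      by (simp add: of_nat_mod)
    then have kn: "kn = (t2 * G2) mod G1" by simp
    have knA: "kn \<in> A2" unfolding kn A2_def using Sset_mem t2(2) by blast
    have z2: "0 \<in> A2" unfolding A2_def by (rule Sset_zero)
    have "s \<le> \<bar>real kn - real (0::nat)\<bar>" using sepr2[OF knA z2] 1 unfolding kn_def by simp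
    then have skn: "s \<le> real_of_int k" unfolding kn_def using 1 by simp
    have rk2: "real kn = real_of_int k" unfolding kn_def using 1 by simp
    have qge: "s / 2 \<le> q" using qk skn eb by linarith
    have out: "alg2_outputs m G1 G2 j r1t r2t =
     {(rnd ((real_of_int (int ((kn * modinv G2 G1) mod G1)) * (m * real G2) + r2t - r1t) / (m * real G1)),
       int ((kn * modinv G2 G1) mod G1))}"
    proof (rule case1)
      show "real (sigma G1 G2 j) / 2 \<le> (r1t - r2t) / m" using qge unfolding q_def s_def sg_def .
      show "kn \<in> Sset G2 G1 (nddot G2 G1 (sigma G1 G2 j))" using knA unfolding A2_def nd2_def sg_def .
      show "- real (sigma G1 G2 j) / 2 \<le> (r1t - r2t) / m - real kn"
        using qk rk2 eb unfolding q_def[symmetric] s_def sg_def by linarith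
      show "(r1t - r2t) / m - real kn < real (sigma G1 G2 j) / 2"
        using qk rk2 eb unfolding q_def[symmetric] s_def sg_def by linarith
      fix x assume x: "x \<in> Sset G2 G1 (nddot G2 G1 (sigma G1 G2 j))"
        "- real (sigma G1 G2 j) / 2 \<le> (r1t - r2t) / m - real x" "(r1t - r2t) / m - real x < real (sigma G1 G2 j) / 2"
      show "x = kn"
      proof (rule ccontr)
        assume "x \<noteq> kn"
        then have "s \<le> \<bar>real x - real kn\<bar>" using sepr2 x(1) knA unfolding A2_def nd2_def sg_def by blast
        moreover have "\<bar>real x - real kn\<bar> < s" using x(2,3) qk rk2 eb unfolding q_def[symmetric] s_def sg_def by linarith
        ultimately show False by simp
      qed
    qed
    have b: "(kn * modinv G2 G1) mod G1 = t2" unfolding kn using modinv_undo[OF cop' G1_gt t2(3)] .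
    have "(real_of_int n2 * (m * real G2) + r2t - r1t) / (m * real G1) = real_of_int n1 - e / real G1"
      using Nr1 Nr2 m_pos G1_gt unfolding e_def m1_def m2_def by (simp add: field_simps)
    moreover have "- 1/2 < e / real G1" "e / real G1 \<le> 1/2" using eb s_lt G1_gt by (auto simp: field_simps)
    ultimately have a: "rnd ((real_of_int n2 * (m * real G2) + r2t - r1t) / (m * real G1)) = n1"
      using rnd_minus by simp
    show ?thesis unfolding out b using a t2(1) unfolding n1_def n2_def m1_def m2_def by simp
  next
    case 2
    define kn where "kn = nat (- k)"
    have "- k = (n1 * int G1) mod int G2"
    proof -
      have "(n1 * int G1) mod int G2 = (- k + n2 * int G2) mod int G2" unfolding k_def by simp
      also have "\<dots> = (- k) mod int G2" by (rule mod_mult_self1)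
      also have "\<dots> = - k" using 2 klb by simp
      finally show ?thesis by simp
    qed
    then have "int kn = int ((t1 * G1) mod G2)" unfolding kn_def using 2 t1(1)
      by (simp add: of_nat_mod)
    then have kn: "kn = (t1 * G1) mod G2" by simp
    have knA: "kn \<in> A1" unfolding kn A1_def using Sset_mem t1(2) by blast
    have z1: "0 \<in> A1" unfolding A1_def by (rule Sset_zero)
    have "s \<le> \<bar>real kn - real (0::nat)\<bar>" using sepr1[OF knA z1] 2 unfolding kn_def by simp
    then have skn: "s \<le> - real_of_int k" unfolding kn_def using 2 by simp
    have rk2: "real kn = - real_of_int k" unfolding kn_def using 2 by simp
    have qlt: "q < - s / 2" using qk skn eb by linarith
    have out: "alg2_outputs m G1 G2 j r1t r2t =
     {(int ((kn * modinv G1 G2) mod G2),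
       rnd ((real_of_int (int ((kn * modinv G1 G2) mod G2)) * (m * real G1) + r1t - r2t) / (m * real G2)))}"
    proof (rule case2)
      show "(r1t - r2t) / m < - real (sigma G1 G2 j) / 2" using qlt unfolding q_def s_def sg_def .
      show "kn \<in> Sset G1 G2 (nddot G1 G2 (sigma G1 G2 j))" using knA unfolding A1_def nd1_def sg_def .
      show "- real (sigma G1 G2 j) / 2 \<le> (r1t - r2t) / m + real kn"
        using qk rk2 eb unfolding q_def[symmetric] s_def sg_def by linarith
      show "(r1t - r2t) / m + real kn < real (sigma G1 G2 j) / 2"
        using qk rk2 eb unfolding q_def[symmetric] s_def sg_def by linarith
      fix x assume x: "x \<in> Sset G1 G2 (nddot G1 G2 (sigma G1 G2 j))"
        "- real (sigma G1 G2 j) / 2 \<le> (r1t - r2t) / m + real x" "(r1t - r2t) / m + real x < real (sigma G1 G2 j) / 2"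
      show "x = kn"
      proof (rule ccontr)
        assume "x \<noteq> kn"
        then have "s \<le> \<bar>real x - real kn\<bar>" using sepr1 x(1) knA unfolding A1_def nd1_def sg_def by blast
        moreover have "\<bar>real x - real kn\<bar> < s" using x(2,3) qk rk2 eb unfolding q_def[symmetric] s_def sg_def by linarith
        ultimately show False by simp
      qed
    qed
    have a: "(kn * modinv G1 G2) mod G2 = t1" unfolding kn using modinv_undo[OF cop G2_gt t1(3)] .
    have "(real_of_int n1 * (m * real G1) + r1t - r2t) / (m * real G2) = real_of_int n2 + e / real G2"
      using Nr1 Nr2 m_pos G2_gt unfolding e_def m1_def m2_def by (simp add: field_simps)
    moreover have "- 1/2 \<le> e / real G2" "e / real G2 < 1/2" using eb s_lt G1_gt G12 by (auto simp: field_simps)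
    ultimately have b: "rnd ((real_of_int n1 * (m * real G1) + r1t - r2t) / (m * real G2)) = n2"
      using rnd_plus by simp
    show ?thesis unfolding out a using b t1(1) unfolding n1_def n2_def m1_def m2_def by simp
  next
    case 3
    have i2: "int (t2 * G2) = n2 * int G2" using t2(1) by simp
    have i1: "int (t1 * G1) = n1 * int G1" using t1(1) by simp
    have "int (t2 * G2) = int (t1 * G1)" using 3 i1 i2 unfolding k_def by linarith
    then have "t2 * G2 = t1 * G1" by (simp only: of_nat_eq_iff)
    then have "G1 dvd t2 * G2" by simp
    then have "G1 dvd t2" using coprime_dvd_mult_left_iff[OF cop] by blast
    then have "t2 = 0" using t2(3) by (metis dvd_imp_le le_antisym less_imp_le_nat not_gr0 not_le)
    then have n2z: "n2 = 0" using t2(1) by simp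
    then have "n1 * int G1 = 0" using 3 unfolding k_def by simp
    then have n1z: "n1 = 0" using G1_gt by simp
    have "alg2_outputs m G1 G2 j r1t r2t = {(0, 0)}"
      by (rule case3) (use qk eb 3 in \<open>auto simp: q_def s_def sg_def\<close>)
    then show ?thesis using n1z n2z unfolding n1_def n2_def m1_def m2_def by simp
  qed
qed

lemma partB:
  fixes m :: real and G1 G2 j :: nat
  assumes m_pos: "m > 0"
    and cop: "coprime G1 G2"
    and G1_gt: "1 < G1" and G12: "G1 < G2"
    and j_ge: "1 \<le> j" and j_le: "j \<le> Kidx G1 G2 + 1"
    and X_def: "X = min (m * real G2 * (1 + real (nddot G2 G1 (sigma G1 G2 j))))
                     (m * real G1 * (1 + real (nddot G1 G2 (sigma G1 G2 j))))"
  shows "let N = X; n1 = \<lfloor>N / (m * real G1)\<rfloor>; n2 = \<lfloor>N / (m * real G2)\<rfloor>;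
           r1 = N - real_of_int n1 * (m * real G1); r2 = N - real_of_int n2 * (m * real G2)
       in \<exists>r1t r2t. 0 \<le> r1t \<and> r1t < m * real G1 \<and> 0 \<le> r2t \<and> r2t < m * real G2 \<and>
            - real (sigma G1 G2 j) / 2 \<le> ((r1t - r1) - (r2t - r2)) / m \<and>
            ((r1t - r1) - (r2t - r2)) / m < real (sigma G1 G2 j) / 2 \<and>
            alg2_outputs m G1 G2 j r1t r2t \<noteq> {} \<and>
            (n1, n2) \<notin> alg2_outputs m G1 G2 j r1t r2t"
proof -
  define m1 where "m1 = m * real G1"
  define m2 where "m2 = m * real G2"
  define N where "N = X"
  define n1 where "n1 = \<lfloor>N / m1\<rfloor>"
  define n2 where "n2 = \<lfloor>N / m2\<rfloor>"
  define r1 where "r1 = N - real_of_int n1 * m1"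
  define r2 where "r2 = N - real_of_int n2 * m2"
  define sg where "sg = sigma G1 G2 j"
  define s where "s = real sg"
  define nd1 where "nd1 = nddot G1 G2 sg"
  define nd2 where "nd2 = nddot G2 G1 sg"
  have cop': "coprime G2 G1" using cop by (rule coprime_commute[THEN iffD1])
  have G2_gt: "1 < G2" using G1_gt G12 by simp
  have sgp: "1 \<le> sg" "sg \<le> sigma G1 G2 1" "sg < G1"
    using sigma_j_props[OF cop G1_gt j_ge j_le] unfolding sg_def by auto
  have s1: "sigma G1 G2 1 = G2 mod G1" by (rule sigma1)
  have sp1: "0 < sigma G1 G2 1" by (rule sigma1_pos[OF cop G1_gt])
  have nd2p: "1 \<le> nd2 \<and> nd2 < G1 \<and> sg \<le> dmin (Sset G2 G1 nd2)"
    unfolding nd2_def by (rule nddot_props) (use sgp s1 sp1 G1_gt in auto)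
  have G1m: "G1 mod G2 = G1" using G12 by simp
  have nd1p: "1 \<le> nd1 \<and> nd1 < G2 \<and> sg \<le> dmin (Sset G1 G2 nd1)"
    unfolding nd1_def by (rule nddot_props) (use sgp G1m G1_gt G2_gt in auto)
  have m1p: "0 < m1" "0 < m2" unfolding m1_def m2_def using m_pos G1_gt G2_gt by auto
  have fl1: "real_of_int n1 \<le> N / m1" "N / m1 < real_of_int n1 + 1" unfolding n1_def by linarith+
  have fl2: "real_of_int n2 \<le> N / m2" "N / m2 < real_of_int n2 + 1" unfolding n2_def by linarith+
  have r1b: "0 \<le> r1" "r1 < m1" using fl1 m1p unfolding r1_def by (auto simp: field_simps)
  have r2b: "0 \<le> r2" "r2 < m2" using fl2 m1p unfolding r2_def by (auto simp: field_simps)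
  have s0: "0 < s" using sgp unfolding s_def by simp
  define q where "q = (r1 - r2) / m"
  have main: "alg2_outputs m G1 G2 j r1 r2 \<noteq> {} \<and> (n1, n2) \<notin> alg2_outputs m G1 G2 j r1 r2"
  proof (cases "m2 * (1 + real nd2) \<le> m1 * (1 + real nd1)")
    case True
    then have NX: "N = m2 * (1 + real nd2)" unfolding N_def X_def m1_def m2_def nd1_def nd2_def sg_def
      by (simp add: mult.assoc)
    then have "N / m2 = real_of_int (1 + int nd2)" using m1p by simp
    then have n2v: "n2 = 1 + int nd2" unfolding n2_def by (simp only: floor_of_int)
    then have "r2 = 0" unfolding r2_def NX by simp
    then have q0: "0 \<le> q" unfolding q_def using r1b m_pos by simp
    show ?thesis
    proof (cases "s / 2 \<le> q")
      case True
      have qq: "real (sigma G1 G2 j) / 2 \<le> (r1 - r2) / m" using True unfolding q_def s_def sg_def .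
      have "(n1, n2) \<notin> alg2_outputs m G1 G2 j r1 r2"
      proof
        assume "(n1, n2) \<in> alg2_outputs m G1 G2 j r1 r2"
        then obtain s2 where s2: "s2 \<in> Sset G2 G1 (nddot G2 G1 (sigma G1 G2 j))"
          "n2 = int ((s2 * modinv G2 G1) mod G1)" using case1_weak(2)[OF qq] by blast
        obtain t where t: "t \<le> nd2" "s2 = t * G2 mod G1" using Sset_elem s2(1) unfolding nd2_def sg_def by blast
        have "(s2 * modinv G2 G1) mod G1 = t" unfolding t(2) using modinv_undo[OF cop' G1_gt] t(1) nd2p by simp
        then show False using s2(2) n2v t(1) by simp
      qed
      then show ?thesis using case1_weak(1)[OF qq] by blast
    next
      case False
      have c1: "- s / 2 \<le> q" "q < s / 2" using False q0 s0 by linarith+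
      have "alg2_outputs m G1 G2 j r1 r2 = {(0, 0)}"
        by (rule case3) (use c1 in \<open>simp_all only: q_def s_def sg_def\<close>)
      then show ?thesis using n2v by simp
    qed
  next
    case False
    then have NX: "N = m1 * (1 + real nd1)" unfolding N_def X_def m1_def m2_def nd1_def nd2_def sg_def
      by (simp add: mult.assoc)
    then have "N / m1 = real_of_int (1 + int nd1)" using m1p by simp
    then have n1v: "n1 = 1 + int nd1" unfolding n1_def by (simp only: floor_of_int)
    then have "r1 = 0" unfolding r1_def NX by simp
    then have q0: "q \<le> 0" unfolding q_def using r2b m_pos by simp
    show ?thesis
    proof (cases "q < - s / 2")
      case True
      have qq: "(r1 - r2) / m < - real (sigma G1 G2 j) / 2" using True unfolding q_def s_def sg_def .
      have "(n1, n2) \<notin> alg2_outputs m G1 G2 j r1 r2"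
      proof
        assume "(n1, n2) \<in> alg2_outputs m G1 G2 j r1 r2"
        then obtain s1 where s1: "s1 \<in> Sset G1 G2 (nddot G1 G2 (sigma G1 G2 j))"
          "n1 = int ((s1 * modinv G1 G2) mod G2)" using case2_weak(2)[OF qq] by blast
        obtain t where t: "t \<le> nd1" "s1 = t * G1 mod G2" using Sset_elem s1(1) unfolding nd1_def sg_def by blast
        have "(s1 * modinv G1 G2) mod G2 = t" unfolding t(2) using modinv_undo[OF cop G2_gt] t(1) nd1p by simp
        then show False using s1(2) n1v t(1) by simp
      qed
      then show ?thesis using case2_weak(1)[OF qq] by blast
    next
      case False
      have c1: "- s / 2 \<le> q" "q < s / 2" using False q0 s0 by linarith+
      have "alg2_outputs m G1 G2 j r1 r2 = {(0, 0)}"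
        by (rule case3) (use c1 in \<open>simp_all only: q_def s_def sg_def\<close>)
      then show ?thesis using n1v by simp
    qed
  qed
  have "\<exists>r1t r2t. 0 \<le> r1t \<and> r1t < m1 \<and> 0 \<le> r2t \<and> r2t < m2 \<and>
            - s / 2 \<le> ((r1t - r1) - (r2t - r2)) / m \<and>
            ((r1t - r1) - (r2t - r2)) / m < s / 2 \<and>
            alg2_outputs m G1 G2 j r1t r2t \<noteq> {} \<and>
            (n1, n2) \<notin> alg2_outputs m G1 G2 j r1t r2t"
    by (rule exI[of _ r1], rule exI[of _ r2]) (use r1b r2b s0 main in auto)
  then show ?thesis unfolding Let_def N_def[symmetric] n1_def[symmetric] m1_def[symmetric] m2_def[symmetric]
     n2_def[symmetric] r1_def[symmetric] r2_def[symmetric] s_def[symmetric] sg_def[symmetric] .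
qed


lemma div_bounds:
  fixes D m s :: real
  assumes "0 < m" "\<bar>D\<bar> < m * s / 2"
  shows "- s / 2 \<le> D / m" "D / m < s / 2"
proof -
  have "- (m * s / 2) < D" "D < m * s / 2" using assms(2) by linarith+
  then show "- s / 2 \<le> D / m" "D / m < s / 2" using assms(1) by (simp_all add: field_simps)
qed

theorem theorem4:
  fixes m :: real and G1 G2 j :: nat
  assumes m_pos: "m > 0"
    and cop: "coprime G1 G2"
    and G1_gt: "1 < G1" and G12: "G1 < G2"
    and j_ge: "1 \<le> j" and j_le: "j \<le> Kidx G1 G2 + 1"
  defines "X \<equiv> min (m * real G2 * (1 + real (nddot G2 G1 (sigma G1 G2 j))))
                     (m * real G1 * (1 + real (nddot G1 G2 (sigma G1 G2 j))))"
  shows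
    "(\<forall>N r1t r2t. 0 \<le> N \<and> N < X \<longrightarrow>
        0 \<le> r1t \<and> r1t < m * real G1 \<longrightarrow> 0 \<le> r2t \<and> r2t < m * real G2 \<longrightarrow>
        (let n1 = \<lfloor>N / (m * real G1)\<rfloor>; n2 = \<lfloor>N / (m * real G2)\<rfloor>;
             r1 = N - real_of_int n1 * (m * real G1); r2 = N - real_of_int n2 * (m * real G2)
         in - real (sigma G1 G2 j) / 2 \<le> ((r1t - r1) - (r2t - r2)) / m \<and>
            ((r1t - r1) - (r2t - r2)) / m < real (sigma G1 G2 j) / 2 \<longrightarrow>
            alg2_outputs m G1 G2 j r1t r2t = {(n1, n2)}))
   \<and> (\<forall>N r1t r2t \<tau>. 0 \<le> N \<and> N < X \<longrightarrow>
        0 \<le> r1t \<and> r1t < m * real G1 \<longrightarrow> 0 \<le> r2t \<and> r2t < m * real G2 \<longrightarrow>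
        \<tau> < m * real (sigma G1 G2 j) / 4 \<longrightarrow>
        (let n1 = \<lfloor>N / (m * real G1)\<rfloor>; n2 = \<lfloor>N / (m * real G2)\<rfloor>;
             r1 = N - real_of_int n1 * (m * real G1); r2 = N - real_of_int n2 * (m * real G2)
         in \<bar>r1t - r1\<bar> \<le> \<tau> \<and> \<bar>r2t - r2\<bar> \<le> \<tau> \<longrightarrow>
            alg2_outputs m G1 G2 j r1t r2t = {(n1, n2)}))
   \<and> (let N = X; n1 = \<lfloor>N / (m * real G1)\<rfloor>; n2 = \<lfloor>N / (m * real G2)\<rfloor>;
           r1 = N - real_of_int n1 * (m * real G1); r2 = N - real_of_int n2 * (m * real G2)
       in \<exists>r1t r2t. 0 \<le> r1t \<and> r1t < m * real G1 \<and> 0 \<le> r2t \<and> r2t < m * real G2 \<and>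
            - real (sigma G1 G2 j) / 2 \<le> ((r1t - r1) - (r2t - r2)) / m \<and>
            ((r1t - r1) - (r2t - r2)) / m < real (sigma G1 G2 j) / 2 \<and>
            alg2_outputs m G1 G2 j r1t r2t \<noteq> {} \<and>
            (n1, n2) \<notin> alg2_outputs m G1 G2 j r1t r2t)"
  proof -
  have X1: "X \<le> m * real G2 * (1 + real (nddot G2 G1 (sigma G1 G2 j)))"
    and X2: "X \<le> m * real G1 * (1 + real (nddot G1 G2 (sigma G1 G2 j)))" unfolding X_def by simp_all
  have P1: "\<And>N r1t r2t. 0 \<le> N \<Longrightarrow> N < X \<Longrightarrow>
        0 \<le> r1t \<Longrightarrow> r1t < m * real G1 \<Longrightarrow> 0 \<le> r2t \<Longrightarrow> r2t < m * real G2 \<Longrightarrow>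
        - real (sigma G1 G2 j) / 2 \<le> ((r1t - (N - real_of_int \<lfloor>N / (m * real G1)\<rfloor> * (m * real G1)))
              - (r2t - (N - real_of_int \<lfloor>N / (m * real G2)\<rfloor> * (m * real G2)))) / m \<Longrightarrow>
        ((r1t - (N - real_of_int \<lfloor>N / (m * real G1)\<rfloor> * (m * real G1)))
              - (r2t - (N - real_of_int \<lfloor>N / (m * real G2)\<rfloor> * (m * real G2)))) / m < real (sigma G1 G2 j) / 2 \<Longrightarrow>
        alg2_outputs m G1 G2 j r1t r2t = {(\<lfloor>N / (m * real G1)\<rfloor>, \<lfloor>N / (m * real G2)\<rfloor>)}"
  proof -
    fix N r1t r2t
    assume h: "0 \<le> N" "N < X" "0 \<le> r1t" "r1t < m * real G1" "0 \<le> r2t" "r2t < m * real G2"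
      "- real (sigma G1 G2 j) / 2 \<le> ((r1t - (N - real_of_int \<lfloor>N / (m * real G1)\<rfloor> * (m * real G1)))
              - (r2t - (N - real_of_int \<lfloor>N / (m * real G2)\<rfloor> * (m * real G2)))) / m"
      "((r1t - (N - real_of_int \<lfloor>N / (m * real G1)\<rfloor> * (m * real G1)))
              - (r2t - (N - real_of_int \<lfloor>N / (m * real G2)\<rfloor> * (m * real G2)))) / m < real (sigma G1 G2 j) / 2"
    have n2: "N < m * real G2 * (1 + real (nddot G2 G1 (sigma G1 G2 j)))" using h(2) X1 by linarith
    have n1: "N < m * real G1 * (1 + real (nddot G1 G2 (sigma G1 G2 j)))" using h(2) X2 by linarith
    show "alg2_outputs m G1 G2 j r1t r2t = {(\<lfloor>N / (m * real G1)\<rfloor>, \<lfloor>N / (m * real G2)\<rfloor>)}"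
      by (rule partA[OF m_pos cop G1_gt G12 j_ge j_le h(1) n2 n1 h(3) h(4) h(5) h(6) h(7) h(8)])
  qed
  have S1: "\<forall>N r1t r2t. 0 \<le> N \<and> N < X \<longrightarrow>
        0 \<le> r1t \<and> r1t < m * real G1 \<longrightarrow> 0 \<le> r2t \<and> r2t < m * real G2 \<longrightarrow>
        (let n1 = \<lfloor>N / (m * real G1)\<rfloor>; n2 = \<lfloor>N / (m * real G2)\<rfloor>;
             r1 = N - real_of_int n1 * (m * real G1); r2 = N - real_of_int n2 * (m * real G2)
         in - real (sigma G1 G2 j) / 2 \<le> ((r1t - r1) - (r2t - r2)) / m \<and>
            ((r1t - r1) - (r2t - r2)) / m < real (sigma G1 G2 j) / 2 \<longrightarrow>
            alg2_outputs m G1 G2 j r1t r2t = {(n1, n2)})"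
    unfolding Let_def using P1 by blast
  have S2: "\<forall>N r1t r2t \<tau>. 0 \<le> N \<and> N < X \<longrightarrow>
        0 \<le> r1t \<and> r1t < m * real G1 \<longrightarrow> 0 \<le> r2t \<and> r2t < m * real G2 \<longrightarrow>
        \<tau> < m * real (sigma G1 G2 j) / 4 \<longrightarrow>
        (let n1 = \<lfloor>N / (m * real G1)\<rfloor>; n2 = \<lfloor>N / (m * real G2)\<rfloor>;
             r1 = N - real_of_int n1 * (m * real G1); r2 = N - real_of_int n2 * (m * real G2)
         in \<bar>r1t - r1\<bar> \<le> \<tau> \<and> \<bar>r2t - r2\<bar> \<le> \<tau> \<longrightarrow>
            alg2_outputs m G1 G2 j r1t r2t = {(n1, n2)})"
    unfolding Let_def
  proof (intro allI impI)
    fix N r1t r2t \<tau> :: real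
    let ?r1 = "N - real_of_int \<lfloor>N / (m * real G1)\<rfloor> * (m * real G1)"
    let ?r2 = "N - real_of_int \<lfloor>N / (m * real G2)\<rfloor> * (m * real G2)"
    assume h: "0 \<le> N \<and> N < X" "0 \<le> r1t \<and> r1t < m * real G1" "0 \<le> r2t \<and> r2t < m * real G2"
      "\<tau> < m * real (sigma G1 G2 j) / 4" "\<bar>r1t - ?r1\<bar> \<le> \<tau> \<and> \<bar>r2t - ?r2\<bar> \<le> \<tau>"
    have d: "\<bar>(r1t - ?r1) - (r2t - ?r2)\<bar> < m * real (sigma G1 G2 j) / 2" using h(4,5) by linarith
    have e1: "- real (sigma G1 G2 j) / 2 \<le> ((r1t - ?r1) - (r2t - ?r2)) / m"
      using div_bounds(1)[OF m_pos d] .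
    have e2: "((r1t - ?r1) - (r2t - ?r2)) / m < real (sigma G1 G2 j) / 2"
      using div_bounds(2)[OF m_pos d] .
    show "alg2_outputs m G1 G2 j r1t r2t = {(\<lfloor>N / (m * real G1)\<rfloor>, \<lfloor>N / (m * real G2)\<rfloor>)}"
      using P1[of N r1t r2t] h(1,2,3) e1 e2 by blast
  qed
  have S3: "let N = X; n1 = \<lfloor>N / (m * real G1)\<rfloor>; n2 = \<lfloor>N / (m * real G2)\<rfloor>;
           r1 = N - real_of_int n1 * (m * real G1); r2 = N - real_of_int n2 * (m * real G2)
       in \<exists>r1t r2t. 0 \<le> r1t \<and> r1t < m * real G1 \<and> 0 \<le> r2t \<and> r2t < m * real G2 \<and>
            - real (sigma G1 G2 j) / 2 \<le> ((r1t - r1) - (r2t - r2)) / m \<and>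
            ((r1t - r1) - (r2t - r2)) / m < real (sigma G1 G2 j) / 2 \<and>
            alg2_outputs m G1 G2 j r1t r2t \<noteq> {} \<and>
            (n1, n2) \<notin> alg2_outputs m G1 G2 j r1t r2t"
    by (rule partB[OF m_pos cop G1_gt G12 j_ge j_le X_def[THEN meta_eq_to_obj_eq]])
  show ?thesis using S1 S2 S3 by blast
qed

end
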